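(* Let $n\ge 4$ and $k\ge 2$. There is an intersecting family $\mathcal{F}\subseteq\mathcal{I}_{n,k}^3$ with $\bigcap_{F\in\mathcal{F}}F=\emptyset$ and $|\mathcal{F}| = |\mathcal{H}_{n,k}^3|$ that is not isomorphic to $\mathcal{H}_{n,k}^3$.
   Context: $\Gamma_{n,k}$ is the disjoint union of $n$ copies of $K_k$, with vertices $(i,j)$, $i\in[n]$ the copy, $j\in[k]$ the vertex within it. $\mathcal{I}_{n,k}^r$ is the set of independent sets of size $r$ in $\Gamma_{n,k}$. A family is intersecting if every two members meet. Families are isomorphic if one is the image of the other under an automorphism of $\Gamma_{n,k}$. For $r\le n-1$, with $H=\{(2,1),\dots,(r+1,1)\}$, $\mathcal{H}_{n,k}^r = \{ F \in \mathcal{I}_{n,k}^r : (1,1)\in F,\ F \cap H \neq \emptyset \} \cup \{H\}$. *)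

theory Defs
  imports Main
begin

type_synonym vtx = "nat \<times> nat"

text \<open>Vertex set of Gamma_{n,k}: pairs (i,j) with i in [n] (copy), j in [k].\<close>
definition gverts :: "nat \<Rightarrow> nat \<Rightarrow> vtx set" where
  "gverts n k = {1..n} \<times> {1..k}"

definition gadj :: "vtx \<Rightarrow> vtx \<Rightarrow> bool" where
  "gadj u v \<longleftrightarrow> fst u = fst v \<and> u \<noteq> v"

definition indep_sets :: "nat \<Rightarrow> nat \<Rightarrow> nat \<Rightarrow> vtx set set" where
  "indep_sets n k r = {F. F \<subseteq> gverts n k \<and> card F = r \<and>
      (\<forall>u\<in>F. \<forall>v\<in>F. \<not> gadj u v)}"

definition intersecting :: "'a set set \<Rightarrow> bool" where
  "intersecting \<F> \<longleftrightarrow> (\<forall>A\<in>\<F>. \<forall>B\<in>\<F>. A \<inter> B \<noteq> {})"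

definition graph_aut :: "nat \<Rightarrow> nat \<Rightarrow> (vtx \<Rightarrow> vtx) \<Rightarrow> bool" where
  "graph_aut n k \<sigma> \<longleftrightarrow> bij_betw \<sigma> (gverts n k) (gverts n k) \<and>
      (\<forall>u\<in>gverts n k. \<forall>v\<in>gverts n k. gadj u v \<longleftrightarrow> gadj (\<sigma> u) (\<sigma> v))"

definition fam_iso :: "nat \<Rightarrow> nat \<Rightarrow> vtx set set \<Rightarrow> vtx set set \<Rightarrow> bool" where
  "fam_iso n k \<F> \<G> \<longleftrightarrow> (\<exists>\<sigma>. graph_aut n k \<sigma> \<and> (\<lambda>F. \<sigma> ` F) ` \<F> = \<G>)"

definition Hset :: "nat \<Rightarrow> vtx set" where
  "Hset r = (\<lambda>i. (i, 1)) ` {2..r+1}"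

definition Hfam :: "nat \<Rightarrow> nat \<Rightarrow> nat \<Rightarrow> vtx set set" where
  "Hfam n k r = {F \<in> indep_sets n k r. (1,1) \<in> F \<and> F \<inter> Hset r \<noteq> {}} \<union> {Hset r}"

end

theory Submission imports Defs begin
definition sw :: "nat \<Rightarrow> nat" where
  "sw i = (if i=1 then 2 else if i=2 then 1 else if i=3 then 4 else if i=4 then 3 else i)"
definition piv :: "vtx \<Rightarrow> vtx" where "piv v = (sw (fst v), snd v)"
definition inD :: "vtx set \<Rightarrow> bool" where
  "inD F \<longleftrightarrow> (1,1)\<in>F \<and> (4,1)\<in>F \<and> (2,1)\<notin>F \<and> (3,1)\<notin>F"

definition Phi :: "vtx set \<Rightarrow> vtx set" where
  "Phi F = (if inD F then piv ` F else F)"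

lemma sw_sw[simp]: "sw (sw i) = i" by (simp add: sw_def)
lemma piv_piv[simp]: "piv (piv v) = v" by (simp add: piv_def)
lemma inj_piv: "inj piv" by (metis injI piv_piv)
lemma sw_eq[simp]: "sw i = sw j \<longleftrightarrow> i = j" by (metis sw_sw)
lemma mem_piv: "x \<in> piv ` F \<longleftrightarrow> piv x \<in> F"
  by (metis image_iff piv_piv)
lemma Hset3: "Hset 3 = {(2,1),(3,1),(4,1)}"
proof -
  have "{2..3+1::nat} = {2,3,4}" by auto
  thus ?thesis unfolding Hset_def by simp
qed

lemma mem_indep3:
  assumes "x \<noteq> y" "x \<noteq> z" "y \<noteq> z" "fst x \<noteq> fst y" "fst x \<noteq> fst z" "fst y \<noteq> fst z"
    "x \<in> gverts n k" "y \<in> gverts n k" "z \<in> gverts n k"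
  shows "{x,y,z} \<in> indep_sets n k 3"
  using assms unfolding indep_sets_def gadj_def by auto

lemma sw_range: "1 \<le> i \<Longrightarrow> i \<le> n \<Longrightarrow> 4 \<le> n \<Longrightarrow> 1 \<le> sw i \<and> sw i \<le> n"
  by (simp add: sw_def)
lemma gadj_piv: "gadj (piv u) (piv v) \<longleftrightarrow> gadj u v"
  unfolding gadj_def piv_def by (cases u, cases v) auto
lemma piv_gverts: "4 \<le> n \<Longrightarrow> u \<in> gverts n k \<Longrightarrow> piv u \<in> gverts n k"
  unfolding gverts_def piv_def using sw_range by (cases u) auto

lemma indep_piv:
  assumes "n \<ge> 4" "F \<in> indep_sets n k r"
  shows "piv ` F \<in> indep_sets n k r"
proof -
  have sub: "F \<subseteq> gverts n k" and c: "card F = r" and ni: "\<forall>u\<in>F. \<forall>v\<in>F. \<not> gadj u v"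
    using assms(2) by (auto simp: indep_sets_def)
  have "piv ` F \<subseteq> gverts n k"
    using sub piv_gverts[OF assms(1)] by blast
  moreover have "card (piv ` F) = r" using c inj_piv
    by (metis card_image inj_on_subset subset_UNIV)
  moreover have "\<forall>u\<in>piv ` F. \<forall>v\<in>piv ` F. \<not> gadj u v"
    using ni gadj_piv by blast
  ultimately show ?thesis by (simp add: indep_sets_def)
qed
lemma Hfam_char:
  "F \<in> Hfam n k 3 \<longleftrightarrow> F = {(2,1),(3,1),(4,1)} \<or>
     (F \<in> indep_sets n k 3 \<and> (1,1) \<in> F \<and> ((2,1) \<in> F \<or> (3,1) \<in> F \<or> (4,1) \<in> F))"
  unfolding Hfam_def Hset3 by blast

lemma H_indep: "n \<ge> 4 \<Longrightarrow> k \<ge> 1 \<Longrightarrow> {(2,1),(3,1),(4,1)} \<in> indep_sets n k 3"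
  by (intro mem_indep3) (simp_all add: gverts_def)

lemma Hfam_indep: assumes "n \<ge> 4" "k \<ge> 1" shows "Hfam n k 3 \<subseteq> indep_sets n k 3"
proof
  fix F assume "F \<in> Hfam n k 3"
  then have "F = {(2,1),(3,1),(4,1)} \<or> F \<in> indep_sets n k 3"
    by (simp only: Hfam_char) (elim disjE conjE; simp)
  then show "F \<in> indep_sets n k 3" using H_indep[OF assms] by (elim disjE) simp_all
qed

theorem lemma3p2:
  fixes n k :: nat
  assumes "n \<ge> 4" and "k \<ge> 2"
  shows "\<exists>\<F>. \<F> \<subseteq> indep_sets n k 3 \<and> intersecting \<F> \<and> \<Inter>\<F> = {} \<and>
            card \<F> = card (Hfam n k 3) \<and> \<not> fam_iso n k \<F> (Hfam n k 3)"
proof -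
  define a :: vtx where "a = (1,1)"
  define b :: vtx where "b = (2,1)"
  define c :: vtx where "c = (3,1)"
  define d :: vtx where "d = (4,1)"
  define e :: vtx where "e = (4,2)"
  define FF where "FF = Phi ` Hfam n k 3"
  have pa: "piv a = b" "piv b = a" "piv c = d" "piv d = c"
    by (auto simp: a_def b_def c_def d_def piv_def sw_def)
  have gv: "a \<in> gverts n k" "b \<in> gverts n k" "c \<in> gverts n k" "d \<in> gverts n k"
     "e \<in> gverts n k" "(3,2) \<in> gverts n k"
    using assms by (auto simp: a_def b_def c_def d_def e_def gverts_def)
  have HF: "F \<in> Hfam n k 3 \<longleftrightarrow> F = {b,c,d} \<or>
     (F \<in> indep_sets n k 3 \<and> a \<in> F \<and> (b \<in> F \<or> c \<in> F \<or> d \<in> F))" for F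
    unfolding a_def b_def c_def d_def by (rule Hfam_char)
  have iD: "inD F \<longleftrightarrow> a \<in> F \<and> d \<in> F \<and> b \<notin> F \<and> c \<notin> F" for F
    unfolding inD_def a_def b_def c_def d_def by simp
  have HI: "Hfam n k 3 \<subseteq> indep_sets n k 3" using Hfam_indep assms by simp
  have sub: "FF \<subseteq> indep_sets n k 3"
  proof
    fix X assume "X \<in> FF"
    then obtain F where F: "F \<in> Hfam n k 3" "X = Phi F" by (auto simp: FF_def)
    then show "X \<in> indep_sets n k 3"
      using HI indep_piv[OF assms(1)] by (auto simp: Phi_def)
  qed
  have shape: "F \<in> Hfam n k 3 \<Longrightarrow> (inD F \<and> b \<in> Phi F \<and> c \<in> Phi F) \<or>
       (\<not> inD F \<and> Phi F = F \<and> (F = {b,c,d} \<or> (a \<in> F \<and> (b \<in> F \<or> c \<in> F))))" for F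
    using HF[of F] iD[of F] pa by (auto simp: Phi_def mem_piv)
  have inter: "intersecting FF"
    unfolding intersecting_def FF_def
  proof (intro ballI)
    fix X Y assume "X \<in> Phi ` Hfam n k 3" "Y \<in> Phi ` Hfam n k 3"
    then obtain F G where "F \<in> Hfam n k 3" "G \<in> Hfam n k 3" "X = Phi F" "Y = Phi G" by auto
    then show "X \<inter> Y \<noteq> {}" using shape[of F] shape[of G] by auto
  qed
  have inj: "inj_on Phi (Hfam n k 3)"
  proof (rule inj_onI)
    fix F G assume F: "F \<in> Hfam n k 3" and G: "G \<in> Hfam n k 3" and eq: "Phi F = Phi G"
    have cross: False if "X \<in> Hfam n k 3" "Y \<in> Hfam n k 3" "inD X" "\<not> inD Y" "piv ` X = Y" for X Y
    proof -
      have "a \<in> Y \<longleftrightarrow> piv a \<in> X" "d \<in> Y \<longleftrightarrow> piv d \<in> X"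
        using that(5) mem_piv by blast+
      moreover have "b \<notin> X" "c \<notin> X" using that(3) iD by blast+
      ultimately have "a \<notin> Y" "d \<notin> Y" using pa by simp_all
      moreover have "Y = {b,c,d} \<or> a \<in> Y" using that(2) HF[of Y] by blast
      ultimately show False by blast
    qed
    show "F = G"
    proof (cases "inD F"; cases "inD G")
      assume "inD F" "inD G"
      then show ?thesis using eq inj_piv by (simp add: Phi_def inj_image_eq_iff)
    next
      assume "inD F" "\<not> inD G"
      then show ?thesis using eq cross[OF F G] unfolding Phi_def by metis
    next
      assume "\<not> inD F" "inD G"
      then show ?thesis using eq cross[OF G F] unfolding Phi_def by metis
    next
      assume "\<not> inD F" "\<not> inD G"
      then show ?thesis using eq by (simp add: Phi_def)
    qed
  qed
  have card: "card FF = card (Hfam n k 3)"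
    unfolding FF_def using inj by (rule card_image)
  have mem: "X \<in> Hfam n k 3 \<Longrightarrow> \<not> inD X \<Longrightarrow> X \<in> FF" for X
    unfolding FF_def by (metis Phi_def image_eqI)
  have i1: "{b,c,d} \<in> FF" using mem HF iD by auto
  have i2: "{a,c,d} \<in> FF"
    apply (rule mem) apply (subst HF) using gv
    by (auto intro!: mem_indep3 simp: iD a_def b_def c_def d_def)
  have i3: "{a,b,d} \<in> FF"
    apply (rule mem) apply (subst HF) using gv
    by (auto intro!: mem_indep3 simp: iD a_def b_def c_def d_def)
  have i4: "{a,b,e} \<in> FF"
    apply (rule mem) apply (subst HF) using gv
    by (auto intro!: mem_indep3 simp: iD a_def b_def c_def d_def e_def)
  have i5: "{a,c,e} \<in> FF"
    apply (rule mem) apply (subst HF) using gv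
    by (auto intro!: mem_indep3 simp: iD a_def b_def c_def d_def e_def)
  have i6: "{b,c,e} \<in> FF"
  proof -
    have m: "{a,d,(3,2)} \<in> Hfam n k 3"
      apply (subst HF) using gv
      by (auto intro!: mem_indep3 simp: a_def b_def c_def d_def)
    have D: "inD {a,d,(3,2)}" by (simp add: iD a_def b_def c_def d_def)
    have "Phi {a,d,(3,2)} = {b,c,e}" using D pa
      by (simp add: Phi_def e_def piv_def sw_def)
    then show ?thesis using m unfolding FF_def by (metis image_eqI)
  qed
  have empty: "\<Inter>FF = {}"
  proof -
    have "\<Inter>FF \<subseteq> {b,c,d} \<inter> {a,c,d} \<inter> {a,b,d} \<inter> {a,b,e}" using i1 i2 i3 i4 by blast
    also have "\<dots> = {}" by (auto simp: a_def b_def c_def d_def e_def)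
    finally show ?thesis by blast
  qed
  have noniso: "\<not> fam_iso n k FF (Hfam n k 3)"
  proof
    assume "fam_iso n k FF (Hfam n k 3)"
    then obtain \<sigma> where aut: "graph_aut n k \<sigma>" and img: "(\<lambda>F. \<sigma> ` F) ` FF = Hfam n k 3"
      unfolding fam_iso_def by blast
    have bij: "bij_betw \<sigma> (gverts n k) (gverts n k)" using aut by (simp add: graph_aut_def)
    hence injs: "inj_on \<sigma> (gverts n k)" and surj: "\<sigma> ` gverts n k = gverts n k"
      by (auto simp: bij_betw_def)
    obtain u where u: "u \<in> gverts n k" "a = \<sigma> u" using gv(1) surj by force
    have FFg: "A \<in> FF \<Longrightarrow> A \<subseteq> gverts n k" for A using sub by (auto simp: indep_sets_def)
    have key: False if A: "A \<in> FF" and B: "B \<in> FF" and uA: "u \<notin> A" and uB: "u \<notin> B"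
      and wA: "w \<in> A" and wB: "w \<notin> B" for A B w
    proof -
      have ne: "A \<noteq> B" using wA wB by blast
      have *: "\<sigma> ` A = {b,c,d}" if "A \<in> FF" "u \<notin> A" for A
      proof -
        have "\<sigma> ` A \<in> Hfam n k 3" using img that by blast
        moreover have "a \<notin> \<sigma> ` A" using u that FFg[OF that(1)] injs
          by (simp add: inj_on_image_mem_iff)
        ultimately show ?thesis using HF by blast
      qed
      hence "\<sigma> ` A = \<sigma> ` B" using *[OF A uA] *[OF B uB] by simp
      hence "A = B" using injs FFg[OF A] FFg[OF B] by (simp add: inj_on_image_eq_iff)
      thus False using ne by simp
    qed
    have ab: "a \<noteq> b" "a \<noteq> c" "a \<noteq> d" "b \<noteq> c" "b \<noteq> d" "c \<noteq> d" "e \<noteq> a" "e \<noteq> b" "e \<noteq> c" "e \<noteq> d"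
      by (auto simp: a_def b_def c_def d_def e_def)
    show False
    proof (cases "u = a")
      case True then show ?thesis using key[OF i1 i6, of d] ab by auto
    next
      case na: False
      show ?thesis
      proof (cases "u = b")
        case True then show ?thesis using key[OF i2 i5, of d] ab by auto
      next
        case nb: False
        show ?thesis
        proof (cases "u = c")
          case True then show ?thesis using key[OF i3 i4, of d] ab by auto
        next
          case nc: False
          show ?thesis
          proof (cases "u = d")
            case True then show ?thesis using key[OF i4 i5, of b] ab by auto
          next
            case False then show ?thesis using key[OF i2 i3, of c] ab na nb nc by auto
          qed
        qed
      qed
    qed
  qed
  show ?thesis using sub inter empty card noniso by blast
qed

end
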